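(* There exist a continuum $K$ and a pairwise disjoint sequence $(f_n)_{n\in\mathbb{N}}$ in $C_1(K)$ such that $K$ is an extension of $[0,1]$ by continuous functions (i.e. $K=[0,1]((g_n)_{n\in\mathbb{N}})$ for some pairwise disjoint sequence $(g_n)_{n\in\mathbb{N}}$ in $C_1([0,1])$) and the extension $K((f_n)_{n\in\mathbb{N}})$ is disconnected.
   Context: All spaces are Hausdorff. A continuum is a metrizable, compact, connected space. For a compact space $K$, $C_1(K)$ denotes the set of continuous functions $K\to[0,1]$; $f,g$ are disjoint if $f\cdot g=0$. For a real function $f$ on $K$, $supp(f)$ is the closure of $\{x\in K: f(x)\neq 0\}$. For a pairwise disjoint sequence $(f_n)_{n\in\mathbb{N}}$ in $C_1(K)$, let $D((f_n)_{n\in\mathbb{N}})$ be the union of all open sets $U\subseteq K$ such that $\{n: U\cap supp(f_n)\neq\emptyset\}$ is finite. The extension of $K$ by $(f_n)_{n\in\mathbb{N}}$, denoted $K((f_n)_{n\in\mathbb{N}})$, is the closure in $K\times[0,1]$ of the graph of the function $\sum_{n\in\mathbb{N}} f_n$ restricted to $D((f_n)_{n\in\mathbb{N}})$. *)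

theory Defs
  imports "HOL-Analysis.Analysis"
begin

definition C1 :: "'a::topological_space set \<Rightarrow> ('a \<Rightarrow> real) set" where
  "C1 K = {f. continuous_on K f \<and> f ` K \<subseteq> {0..1}}"

text \<open>Support of f as a function on K (K closed in the ambient space in all uses).\<close>
definition supp_on :: "'a::topological_space set \<Rightarrow> ('a \<Rightarrow> real) \<Rightarrow> 'a set" where
  "supp_on K f = closure {x \<in> K. f x \<noteq> 0}"

definition pairwise_disjoint_seq :: "'a set \<Rightarrow> (nat \<Rightarrow> 'a \<Rightarrow> real) \<Rightarrow> bool" where
  "pairwise_disjoint_seq K f \<longleftrightarrow> (\<forall>n m. n \<noteq> m \<longrightarrow> (\<forall>x\<in>K. f n x * f m x = 0))"

definition Dset :: "'a::topological_space set \<Rightarrow> (nat \<Rightarrow> 'a \<Rightarrow> real) \<Rightarrow> 'a set" where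
  "Dset K f = \<Union>{U. openin (top_of_set K) U \<and> finite {n. U \<inter> supp_on K (f n) \<noteq> {}}}"

definition extension :: "'a::topological_space set \<Rightarrow> (nat \<Rightarrow> 'a \<Rightarrow> real) \<Rightarrow> ('a \<times> real) set" where
  "extension K f = closure {(x, \<Sum>n. f n x) | x. x \<in> Dset K f}"

end

theory Submission
  imports Defs
begin

definition rr :: "nat \<Rightarrow> real" where "rr n = (1/2)^(n+3)"
definition aa :: "nat \<Rightarrow> real" where "aa n = 1/2 - (1/2)^(Suc n)"
definition gg :: "nat \<Rightarrow> real \<Rightarrow> real" where
  "gg n x = max 0 (1 - \<bar>x - (aa n + rr n)\<bar> / rr n)"
definition ff :: "nat \<Rightarrow> real \<times> real \<Rightarrow> real" where
  "ff n p = max 0 (min (1/2 - snd p) (1 - \<bar>fst p - aa n\<bar> / rr n))"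

lemma rr_pos: "rr n > 0" by (simp add: rr_def)
lemma aa_Suc: "aa (Suc n) = aa n + 2 * rr n"
  by (simp add: aa_def rr_def power_add power_divide)
lemma aa_half: "aa n < 1/2" by (simp add: aa_def)
lemma aa_nonneg: "aa n \<ge> 0"
proof -
  have "(1/2::real)^(Suc n) \<le> 1/2" by (simp add: power_le_one)
  then show ?thesis by (simp add: aa_def)
qed
lemma aa_mono: "n \<le> m \<Longrightarrow> aa n \<le> aa m"
  unfolding aa_def by (simp add: power_decreasing)
lemma rr_mono: "n \<le> m \<Longrightarrow> rr m \<le> rr n"
  unfolding rr_def by (simp add: power_decreasing)
lemma half_minus_aa: "1/2 - aa n = 4 * rr n"
  by (simp add: aa_def rr_def power_add power_divide)

lemma gg_nz: "gg n x \<noteq> 0 \<Longrightarrow> aa n < x \<and> x < aa (Suc n)"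
proof -
  assume "gg n x \<noteq> 0"
  moreover have "gg n x \<ge> 0" by (simp add: gg_def)
  ultimately have "0 < max 0 (1 - \<bar>x - (aa n + rr n)\<bar> / rr n)" unfolding gg_def by linarith
  then have "\<bar>x - (aa n + rr n)\<bar> / rr n < 1" by (simp add: less_max_iff_disj)
  then have "\<bar>x - (aa n + rr n)\<bar> < rr n" using rr_pos[of n] by (simp add: divide_less_eq)
  then show ?thesis by (auto simp: aa_Suc)
qed

lemma ff_nz: "ff n p \<noteq> 0 \<Longrightarrow> \<bar>fst p - aa n\<bar> < rr n"
proof -
  assume "ff n p \<noteq> 0"
  moreover have "ff n p \<ge> 0" by (simp add: ff_def)
  ultimately have "0 < max 0 (min (1/2 - snd p) (1 - \<bar>fst p - aa n\<bar> / rr n))" unfolding ff_def by linarith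
  then have "0 < min (1/2 - snd p) (1 - \<bar>fst p - aa n\<bar> / rr n)" by (simp add: less_max_iff_disj)
  then have "1 - \<bar>fst p - aa n\<bar> / rr n > 0" by simp
  then show ?thesis using rr_pos[of n] by (simp add: divide_less_eq)
qed

lemma gg_range: "gg n x \<in> {0..1}"
  using rr_pos[of n] by (auto simp: gg_def)
lemma ff_range: "ff n p \<in> {0..1}"
proof -
  have "\<bar>fst p - aa n\<bar> / rr n \<ge> 0" using rr_pos[of n] by simp
  then have "min (1/2 - snd p) (1 - \<bar>fst p - aa n\<bar> / rr n) \<le> 1" by linarith
  then show ?thesis by (auto simp: ff_def)
qed

lemma gg_cont: "continuous_on S (gg n)"
  unfolding gg_def by (intro continuous_intros) (use rr_pos[of n] in auto)
lemma gg_cont2: "continuous_on S (\<lambda>q. gg n (fst q))"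
  unfolding gg_def by (intro continuous_intros) (use rr_pos[of n] in auto)
lemma ff_cont: "continuous_on S (ff n)"
  unfolding ff_def by (intro continuous_intros) (use rr_pos[of n] in auto)

lemma gg_disj: "n \<noteq> m \<Longrightarrow> gg n x * gg m x = 0"
proof (rule ccontr)
  assume nm: "n \<noteq> m" and "gg n x * gg m x \<noteq> 0"
  then have a: "gg n x \<noteq> 0" "gg m x \<noteq> 0" by auto
  show False
  proof (cases "n < m")
    case True
    then have "aa (Suc n) \<le> aa m" by (intro aa_mono) simp
    then show False using gg_nz[OF a(1)] gg_nz[OF a(2)] by auto
  next
    case False
    then have "aa (Suc m) \<le> aa n" using nm by (intro aa_mono) simp
    then show False using gg_nz[OF a(1)] gg_nz[OF a(2)] by auto
  qed
qed

lemma ff_disj: "n \<noteq> m \<Longrightarrow> ff n p * ff m p = 0"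
proof (rule ccontr)
  assume nm: "n \<noteq> m" and "ff n p * ff m p \<noteq> 0"
  then have a: "ff n p \<noteq> 0" "ff m p \<noteq> 0" by auto
  have *: "\<And>n m. n < m \<Longrightarrow> ff n p \<noteq> 0 \<Longrightarrow> ff m p \<noteq> 0 \<Longrightarrow> False"
  proof -
    fix n m assume "n < m" "ff n p \<noteq> 0" "ff m p \<noteq> 0"
    then have "aa (Suc n) \<le> aa m" "rr m \<le> rr n" by (intro aa_mono rr_mono, simp)+
    then show False using ff_nz[OF \<open>ff n p \<noteq> 0\<close>] ff_nz[OF \<open>ff m p \<noteq> 0\<close>] aa_Suc[of n] by auto
  qed
  show False using nm a *[of n m] *[of m n] by (cases "n < m") auto
qed

lemma suminf_one: "(\<And>n. n \<noteq> j \<Longrightarrow> h n = 0) \<Longrightarrow> suminf h = (h j :: real)"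
  using suminf_finite[of "{j}" h] by auto

lemma aa_ex: "x < 1/2 \<Longrightarrow> \<exists>N. x < aa N"
proof -
  assume "x < 1/2"
  then obtain N where "(1/2::real)^N < 1/2 - x"
    using real_arch_pow_inv[of "1/2 - x" "1/2::real"] by auto
  then have "(1/2::real)^(Suc N) < 1/2 - x"
  proof -
    have "(1/2::real)^(Suc N) \<le> (1/2)^N" by (rule power_decreasing) auto
    then show ?thesis using \<open>(1/2::real)^N < 1/2 - x\<close> by linarith
  qed
  then have "x < aa N" by (simp add: aa_def)
  then show ?thesis by blast
qed

lemma aa_interval: "0 \<le> x \<Longrightarrow> x < aa N \<Longrightarrow> \<exists>k<N. aa k \<le> x \<and> x < aa (Suc k)"
proof (induction N)
  case 0 then show ?case by (simp add: aa_def)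
next
  case (Suc N)
  then show ?case by (cases "x < aa N") (auto intro: less_SucI)
qed


lemma gg_zero: "x \<le> aa n \<or> aa (Suc n) \<le> x \<Longrightarrow> gg n x = 0"
proof (rule ccontr)
  assume "x \<le> aa n \<or> aa (Suc n) \<le> x" "gg n x \<noteq> 0"
  then show False using gg_nz[of n x] by auto
qed

definition GG :: "real \<Rightarrow> real" where "GG x = (\<Sum>n. gg n x)"

lemma GG_right: "1/2 \<le> x \<Longrightarrow> GG x = 0"
proof -
  assume "1/2 \<le> x"
  have "gg n x = 0" for n
  proof (rule gg_zero)
    show "x \<le> aa n \<or> aa (Suc n) \<le> x" using aa_half[of "Suc n"] \<open>1/2 \<le> x\<close> by linarith
  qed
  then show ?thesis by (simp add: GG_def)
qed

lemma GG_fin: "x \<le> aa N \<Longrightarrow> GG x = (\<Sum>n<N. gg n x)"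
proof -
  assume x: "x \<le> aa N"
  have "gg n x = 0" if "n \<notin> {..<N}" for n
  proof (rule gg_zero)
    have "aa N \<le> aa n" using that by (intro aa_mono) simp
    then show "x \<le> aa n \<or> aa (Suc n) \<le> x" using x by linarith
  qed
  then show ?thesis unfolding GG_def by (rule suminf_finite[OF finite_lessThan])
qed

lemma gg_other: "aa k \<le> x \<Longrightarrow> x < aa (Suc k) \<Longrightarrow> n \<noteq> k \<Longrightarrow> gg n x = 0"
proof -
  assume a: "aa k \<le> x" "x < aa (Suc k)" "n \<noteq> k"
  show ?thesis
  proof (cases "n < k")
    case True then have "aa (Suc n) \<le> aa k" by (intro aa_mono) simp
    then show ?thesis using a by (intro gg_zero) auto
  next
    case False then have "aa (Suc k) \<le> aa n" using a by (intro aa_mono) simp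
    then show ?thesis using a by (intro gg_zero) auto
  qed
qed

lemma GG_in: "aa k \<le> x \<Longrightarrow> x < aa (Suc k) \<Longrightarrow> GG x = gg k x"
  unfolding GG_def by (rule suminf_one) (rule gg_other)

lemma GG_range: "0 \<le> x \<Longrightarrow> GG x \<in> {0..1}"
proof (cases "x < 1/2")
  case True
  assume "0 \<le> x"
  obtain N where "x < aa N" using aa_ex True by blast
  then obtain k where "aa k \<le> x" "x < aa (Suc k)" using aa_interval \<open>0 \<le> x\<close> by blast
  then show ?thesis using GG_in gg_range by simp
next
  case False then show ?thesis using GG_right by simp
qed

lemma supp_g: "supp_on {0..1} (gg n) \<subseteq> {aa n..aa (Suc n)}"
proof -
  have "{x \<in> {0..1}. gg n x \<noteq> 0} \<subseteq> {aa n..aa (Suc n)}" using gg_nz by fastforce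
  then have "closure {x \<in> {0..1}. gg n x \<noteq> 0} \<subseteq> closure {aa n..aa (Suc n)}" by (rule closure_mono)
  then show ?thesis by (simp add: supp_on_def)
qed

lemma supp_f: "supp_on K (ff n) \<subseteq> {q. \<bar>fst q - aa n\<bar> \<le> rr n}"
proof -
  have c: "closed {q::real\<times>real. \<bar>fst q - aa n\<bar> \<le> rr n}"
    by (intro closed_Collect_le continuous_intros)
  have "{x \<in> K. ff n x \<noteq> 0} \<subseteq> {q. \<bar>fst q - aa n\<bar> \<le> rr n}" using ff_nz by fastforce
  then show ?thesis unfolding supp_on_def using c by (rule closure_minimal)
qed

lemma DsetI: "openin (top_of_set K) U \<Longrightarrow> x \<in> U \<Longrightarrow> finite {n. U \<inter> supp_on K (f n) \<noteq> {}} \<Longrightarrow> x \<in> Dset K f"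
  unfolding Dset_def by blast

lemma Dset_sub: "Dset K f \<subseteq> K"
  unfolding Dset_def using openin_subset by fastforce

lemma Dg: "x \<in> {0..1} \<Longrightarrow> x \<noteq> 1/2 \<Longrightarrow> x \<in> Dset {0..1} gg"
proof -
  assume x: "x \<in> {0..1}" "x \<noteq> 1/2"
  show ?thesis
  proof (cases "x < 1/2")
    case True
    then obtain N where N: "x < aa N" using aa_ex by blast
    let ?U = "{0..1} \<inter> {..<aa N}"
    have "{n. ?U \<inter> supp_on {0..1} (gg n) \<noteq> {}} \<subseteq> {..<N}"
    proof
      fix n assume "n \<in> {n. ?U \<inter> supp_on {0..1} (gg n) \<noteq> {}}"
      then obtain y where "y < aa N" "y \<in> supp_on {0..1} (gg n)" by auto
      then have "aa n < aa N" using supp_g by fastforce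
      then show "n \<in> {..<N}" using aa_mono[of N n] by (auto simp: not_less[symmetric])
    qed
    then show ?thesis using x N by (intro DsetI[of _ ?U]) (auto intro: finite_subset)
  next
    case False
    let ?U = "{0..1} \<inter> {1/2<..}"
    have "{n. ?U \<inter> supp_on {0..1} (gg n) \<noteq> {}} = {}"
    proof -
      { fix n y assume "y > 1/2" "y \<in> supp_on {0..1} (gg n)"
        then have False using supp_g[of n] aa_half[of "Suc n"] by fastforce }
      then show ?thesis by auto
    qed
    then show ?thesis using x False by (intro DsetI[of _ ?U]) auto
  qed
qed

definition MM :: "(real \<times> real) set" where "MM = {(x, GG x) | x. x \<in> Dset {0..1} gg}"
definition KK :: "(real \<times> real) set" where "KK = extension {0..1} gg"

lemma KK_eq: "KK = closure MM"
  unfolding KK_def extension_def MM_def GG_def by simp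

lemma MM_sub: "MM \<subseteq> KK" unfolding KK_eq by (rule closure_subset)

lemma MM_I: "x \<in> {0..1} \<Longrightarrow> x \<noteq> 1/2 \<Longrightarrow> (x, GG x) \<in> MM"
  unfolding MM_def using Dg by blast

lemma K_left: "p \<in> KK \<Longrightarrow> fst p < 1/2 \<Longrightarrow> snd p = GG (fst p) \<and> 0 \<le> fst p"
proof -
  assume p: "p \<in> KK" "fst p < 1/2"
  obtain N where N: "fst p < aa N" using aa_ex p by blast
  let ?E = "({q. aa N \<le> fst q} \<union> {q. snd q = (\<Sum>n<N. gg n (fst q))}) \<inter> {q. 0 \<le> fst q}"
  have c: "closed ?E"
    by (intro closed_Int closed_Un closed_Collect_le closed_Collect_eq continuous_intros gg_cont2)
  have "MM \<subseteq> ?E"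
  proof
    fix q assume "q \<in> MM"
    then obtain x where q: "q = (x, GG x)" "x \<in> Dset {0..1} gg" unfolding MM_def by auto
    then have "x \<in> {0..1}" using Dset_sub by blast
    then show "q \<in> ?E" using q GG_fin[of x N] by (cases "x \<le> aa N") auto
  qed
  then have "KK \<subseteq> ?E" unfolding KK_eq using c by (rule closure_minimal)
  then show ?thesis using p N GG_fin[of "fst p" N] by auto
qed

lemma K_right: "p \<in> KK \<Longrightarrow> 1/2 < fst p \<Longrightarrow> snd p = 0"
proof -
  assume p: "p \<in> KK" "1/2 < fst p"
  let ?E = "{q::real\<times>real. fst q \<le> 1/2} \<union> {q. snd q = 0}"
  have c: "closed ?E"
    by (intro closed_Un closed_Collect_le closed_Collect_eq continuous_intros)
  have "MM \<subseteq> ?E"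
  proof
    fix q assume "q \<in> MM"
    then obtain x where q: "q = (x, GG x)" unfolding MM_def by auto
    show "q \<in> ?E"
    proof (cases "x \<le> 1/2")
      case False then show ?thesis using q GG_right[of x] by auto
    qed (use q in auto)
  qed
  then have "KK \<subseteq> ?E" unfolding KK_eq using c by (rule closure_minimal)
  then show ?thesis using p by auto
qed


definition FF :: "real \<times> real \<Rightarrow> real" where "FF p = (\<Sum>n. ff n p)"

lemma FF_eq: "ff j p \<noteq> 0 \<Longrightarrow> FF p = ff j p"
  unfolding FF_def
proof (rule suminf_one)
  fix n assume "ff j p \<noteq> 0" "n \<noteq> j"
  then show "ff n p = 0" using ff_disj[of n j p] by auto
qed

lemma FF_zero: "(\<And>n. ff n p = 0) \<Longrightarrow> FF p = 0"
  unfolding FF_def by simp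

lemma ff_zero_ge: "1/2 \<le> fst p \<Longrightarrow> ff n p = 0"
proof (rule ccontr)
  assume a: "1/2 \<le> fst p" "ff n p \<noteq> 0"
  have "\<bar>fst p - aa n\<bar> < rr n" using a(2) by (rule ff_nz)
  moreover have "fst p - aa n \<ge> 4 * rr n" using a(1) half_minus_aa[of n] by linarith
  ultimately show False using abs_ge_self[of "fst p - aa n"] rr_pos[of n] by linarith
qed

lemma left_key:
  assumes p: "p \<in> KK" "fst p < 1/2" "snd p < 1/4"
  shows "FF p \<ge> 1/4"
proof -
  define x where "x = fst p"
  define y where "y = snd p"
  have x0: "0 \<le> x" and yG: "y = GG x" using K_left[OF p(1,2)] by (auto simp: x_def y_def)
  obtain N where "x < aa N" using aa_ex p(2) x_def by blast
  then obtain k where k: "aa k \<le> x" "x < aa (Suc k)" using aa_interval x0 by blast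
  have yg: "y = gg k x" using yG GG_in[OF k] by simp
  have y0: "0 \<le> y" using yg gg_range by simp
  have y4: "y < 1/4" using p(3) y_def by simp
  have rk: "rr k > 0" using rr_pos by simp
  have "1 - \<bar>x - (aa k + rr k)\<bar> / rr k \<le> gg k x" by (simp add: gg_def)
  then have "3/4 < \<bar>x - (aa k + rr k)\<bar> / rr k" using yg y4 by linarith
  then have "3/4 * rr k < \<bar>x - (aa k + rr k)\<bar>" using rk by (simp add: less_divide_eq)
  then have cases: "x - aa k < rr k / 4 \<or> aa (Suc k) - x < rr k / 4"
    using k aa_Suc[of k] rk by (cases "x \<le> aa k + rr k") (auto simp: abs_if split: if_splits)
  show ?thesis
  proof (cases "x - aa k < rr k / 4")
    case True
    have "\<bar>fst p - aa k\<bar> / rr k < 1/4"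
      using True k rk by (simp add: x_def[symmetric] divide_less_eq)
    then have "1 - \<bar>fst p - aa k\<bar> / rr k > 3/4" by linarith
    moreover have "1/2 - snd p > 1/4" using y4 y_def by simp
    ultimately have "min (1/2 - snd p) (1 - \<bar>fst p - aa k\<bar> / rr k) > 1/4" unfolding min_less_iff_conj by linarith
    then have "ff k p > 1/4" unfolding ff_def by (simp add: less_max_iff_disj)
    then show ?thesis using FF_eq[of k p] by simp
  next
    case False
    then have c: "aa (Suc k) - x < rr k / 4" using cases by simp
    have rs: "rr (Suc k) = rr k / 2"
      unfolding rr_def by (simp only: add_Suc power_Suc)
    have "\<bar>fst p - aa (Suc k)\<bar> / rr (Suc k) < 1/2"
      using c k rk rs by (simp add: x_def[symmetric] divide_less_eq)
    then have "1 - \<bar>fst p - aa (Suc k)\<bar> / rr (Suc k) > 1/2" by linarith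
    moreover have "1/2 - snd p > 1/4" using y4 y_def by simp
    ultimately have "min (1/2 - snd p) (1 - \<bar>fst p - aa (Suc k)\<bar> / rr (Suc k)) > 1/4" unfolding min_less_iff_conj by linarith
    then have "ff (Suc k) p > 1/4" unfolding ff_def by (simp add: less_max_iff_disj)
    then show ?thesis using FF_eq[of "Suc k" p] by simp
  qed
qed

lemma middle:
  assumes p: "fst p = 1/2" "1/16 < snd p" "snd p < 1/4"
  shows "p \<notin> Dset KK ff"
proof
  assume "p \<in> Dset KK ff"
  then obtain U where U: "openin (top_of_set KK) U" "p \<in> U" "finite {n. U \<inter> supp_on KK (ff n) \<noteq> {}}"
    unfolding Dset_def by blast
  obtain T where T: "open T" "U = KK \<inter> T" using U(1) by (auto simp: openin_open)
  obtain e where e: "e > 0" "ball p e \<subseteq> T" using T U(2) open_contains_ball by blast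
  obtain N where N: "(1/2::real)^N < e" using real_arch_pow_inv[of e "1/2::real"] e by auto
  define y where "y = snd p"
  have y: "1/16 < y" "y < 1/4" using p y_def by auto
  have sub: "{N..} \<subseteq> {n. U \<inter> supp_on KK (ff n) \<noteq> {}}"
  proof
    fix n assume n: "n \<in> {N..}"
    define xn where "xn = aa n + y * rr n"
    have rn: "rr n > 0" using rr_pos by simp
    have xr: "aa n \<le> xn" "xn < aa (Suc n)" using y rn aa_Suc[of n] by (auto simp: xn_def)
    have xh: "xn < 1/2" using xr aa_half[of "Suc n"] by simp
    have x0: "0 \<le> xn" using xr aa_nonneg[of n] by simp
    have "GG xn = gg n xn" by (rule GG_in[OF xr])
    also have "\<dots> = y" unfolding gg_def xn_def using y rn
      by (simp add: abs_if field_simps)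
    finally have G: "GG xn = y" .
    have qM: "(xn, y) \<in> KK" using MM_I[of xn] G x0 xh MM_sub by auto
    have "ff n (xn, y) = 1/2 - y" unfolding ff_def xn_def using y rn by (simp add: field_simps)
    then have fnz: "ff n (xn, y) \<noteq> 0" using y by simp
    have d1: "dist (xn, y) p = 1/2 - xn" using p y_def xh
      by (cases p) (simp add: dist_Pair_Pair dist_real_def)
    have "y * rr n \<ge> 0" using y rn by simp
    then have "1/2 - xn \<le> 4 * rr n" using half_minus_aa[of n] xn_def by linarith
    also have "\<dots> \<le> 4 * rr N" using rr_mono[of N n] n by simp
    also have "\<dots> = (1/2)^N / 2" by (simp add: rr_def power_add power_divide)
    also have "\<dots> < e" using N e by linarith
    finally have "(xn, y) \<in> ball p e" using d1 by (simp add: dist_commute)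
    then have "(xn, y) \<in> U" using e T qM by auto
    moreover have "(xn, y) \<in> supp_on KK (ff n)"
      unfolding supp_on_def using qM fnz closure_subset by fastforce
    ultimately show "n \<in> {n. U \<inter> supp_on KK (ff n) \<noteq> {}}" by auto
  qed
  have "finite {N..}" by (rule finite_subset[OF sub U(3)])
  with infinite_Ici[of N] show False by contradiction
qed


lemma KK_conn: "connected KK"
proof -
  define P where "P N = (\<lambda>x. (x, \<Sum>n<N. gg n x)) ` {0..aa N}" for N
  define S where "S = (\<Union>N. P N)"
  have Pc: "connected (P N)" for N
    unfolding P_def by (intro connected_continuous_image continuous_intros gg_cont connected_Icc)
  have P0: "(0,0) \<in> P N" for N
  proof -
    have "(\<Sum>n<N. gg n 0) = 0" using aa_nonneg by (intro sum.neutral) (auto intro: gg_zero)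
    then show ?thesis unfolding P_def using aa_nonneg[of N] by (intro image_eqI[of _ _ 0]) auto
  qed
  have Sc: "connected S" unfolding S_def
    by (rule connected_Union) (use Pc P0 in blast)+
  have SM: "S \<subseteq> MM"
  proof
    fix q assume "q \<in> S"
    then obtain N x where q: "x \<in> {0..aa N}" "q = (x, \<Sum>n<N. gg n x)" unfolding S_def P_def by auto
    then have "x < 1/2" "x \<in> {0..1}" using aa_half[of N] by auto
    then show "q \<in> MM" using MM_I[of x] GG_fin[of x N] q by auto
  qed
  define S2 where "S2 = (\<lambda>x::real. (x, 0::real)) ` {1/2..1}"
  have S2c: "connected S2" unfolding S2_def
    by (intro connected_continuous_image continuous_intros connected_Icc)
  have half: "(1/2, 0) \<in> closure S"
  proof -
    have mem: "(aa N, 0) \<in> S" for N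
    proof -
      have "(\<Sum>n<N. gg n (aa N)) = 0"
        by (intro sum.neutral) (auto intro!: gg_zero aa_mono)
      then have "(aa N, 0) \<in> P N" unfolding P_def using aa_nonneg[of N]
        by (intro image_eqI[of _ _ "aa N"]) auto
      then show ?thesis unfolding S_def by auto
    qed
    have "(\<lambda>N. (1/2::real)^N) \<longlonglongrightarrow> 0" by (rule LIMSEQ_power_zero) simp
    then have "(\<lambda>N. (1/2::real)^(Suc N)) \<longlonglongrightarrow> 0" by (rule LIMSEQ_Suc)
    then have "(\<lambda>N. 1/2 - (1/2::real)^(Suc N)) \<longlonglongrightarrow> 1/2 - 0" by (intro tendsto_intros)
    then have "(\<lambda>N. aa N) \<longlonglongrightarrow> 1/2" by (simp add: aa_def)
    then have "(\<lambda>N. (aa N, 0::real)) \<longlonglongrightarrow> (1/2, 0)" by (intro tendsto_intros)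
    then show ?thesis unfolding closure_sequential using mem by (intro exI[of _ "\<lambda>N. (aa N, 0::real)"]) auto
  qed
  define A where "A = closure S \<union> S2"
  have h2: "(1/2, 0) \<in> S2" unfolding S2_def by (rule image_eqI[of _ _ "1/2"]) auto
  have Ac: "connected A" unfolding A_def
    by (rule connected_Un[OF connected_imp_connected_closure[OF Sc] S2c]) (use half h2 in blast)
  have cSK: "closure S \<subseteq> KK" using closure_mono[OF SM] KK_eq by simp
  have AK: "A \<subseteq> KK"
  proof
    fix q assume "q \<in> A"
    then have "q \<in> closure S \<or> q \<in> S2" unfolding A_def by blast
    then show "q \<in> KK"
    proof
      assume "q \<in> closure S" then show ?thesis using cSK by blast
    next
      assume "q \<in> S2"
      then obtain x where x: "x \<in> {1/2..1}" "q = (x, 0)" unfolding S2_def by blast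
      show ?thesis
      proof (cases "x = 1/2")
        case True then show ?thesis using x half cSK by blast
      next
        case False
        then have "(x, GG x) \<in> MM" using x by (intro MM_I) auto
        moreover have "GG x = 0" using x by (intro GG_right) simp
        ultimately show ?thesis using x MM_sub by auto
      qed
    qed
  qed
  have "MM \<subseteq> A"
  proof
    fix q assume "q \<in> MM"
    then obtain x where q: "q = (x, GG x)" "x \<in> Dset {0..1} gg" unfolding MM_def by auto
    then have x: "x \<in> {0..1}" using Dset_sub by blast
    show "q \<in> A"
    proof (cases "x < 1/2")
      case True
      then obtain N where N: "x < aa N" using aa_ex by blast
      have "q = (x, \<Sum>n<N. gg n x)" using q GG_fin[of x N] N by simp
      moreover have "x \<in> {0..aa N}" using x N by simp
      ultimately have "q \<in> P N" unfolding P_def by (intro image_eqI[of _ _ x])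
      then have "q \<in> S" unfolding S_def by blast
      then show ?thesis unfolding A_def using closure_subset[of S] by blast
    next
      case False
      then have "GG x = 0" by (intro GG_right) simp
      then have "q = (x, 0)" using q by simp
      moreover have "x \<in> {1/2..1}" using x False by simp
      ultimately have "q \<in> S2" unfolding S2_def by (intro image_eqI[of _ _ x])
      then show ?thesis unfolding A_def by blast
    qed
  qed
  then have "KK \<subseteq> closure A" unfolding KK_eq by (rule closure_mono)
  then show ?thesis using connected_intermediate_closure[OF Ac AK] by blast
qed

lemma KK_compact: "compact KK"
proof -
  have "MM \<subseteq> cbox (0,0) (1,1)"
  proof
    fix q assume "q \<in> MM"
    then obtain x where q: "q = (x, GG x)" "x \<in> Dset {0..1} gg" unfolding MM_def by auto
    then have x: "x \<in> {0..1}" using Dset_sub by blast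
    then show "q \<in> cbox (0,0) (1,1)" using q GG_range[of x] by (auto simp: cbox_Pair_iff)
  qed
  then have "bounded MM" by (rule bounded_subset[OF bounded_cbox])
  then show ?thesis unfolding KK_eq by (simp add: compact_closure)
qed

lemma KK_ne: "(1, 0) \<in> KK"
  using MM_I[of 1] GG_right[of 1] MM_sub by auto

lemma ext_disc: "\<not> connected (extension KK ff)"
proof -
  define MF where "MF = {(p, FF p) | p. p \<in> Dset KK ff}"
  have E: "extension KK ff = closure MF" unfolding extension_def MF_def FF_def by simp
  define SL where "SL = {q::(real\<times>real)\<times>real. 1/4 \<le> snd (fst q)} \<union> {q. 1/4 \<le> snd q}"
  define SR where "SR = {q::(real\<times>real)\<times>real. snd (fst q) \<le> 1/16} \<inter> {q. snd q \<le> 1/8}"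
  have cL: "closed SL" unfolding SL_def by (intro closed_Un closed_Collect_le continuous_intros)
  have cR: "closed SR" unfolding SR_def by (intro closed_Int closed_Collect_le continuous_intros)
  have dj: "SL \<inter> SR = {}" unfolding SL_def SR_def by auto
  have "MF \<subseteq> SL \<union> SR"
  proof
    fix q assume "q \<in> MF"
    then obtain p where q: "q = (p, FF p)" "p \<in> Dset KK ff" unfolding MF_def by auto
    then have pK: "p \<in> KK" using Dset_sub by blast
    consider "fst p < 1/2" | "fst p > 1/2" | "fst p = 1/2" by linarith
    then show "q \<in> SL \<union> SR"
    proof cases
      case 1
      show ?thesis
      proof (cases "snd p < 1/4")
        case True then show ?thesis using left_key[OF pK 1] q unfolding SL_def by auto
      next
        case False then show ?thesis using q unfolding SL_def by auto
      qed
    next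
      case 2
      then have "snd p = 0" "FF p = 0" using K_right pK FF_zero ff_zero_ge by auto
      then show ?thesis using q unfolding SR_def by auto
    next
      case 3
      then have F0: "FF p = 0" using FF_zero ff_zero_ge by auto
      show ?thesis
      proof (cases "snd p \<ge> 1/4")
        case True then show ?thesis using q unfolding SL_def by auto
      next
        case False
        show ?thesis
        proof (cases "snd p \<le> 1/16")
          case True then show ?thesis using q F0 unfolding SR_def by auto
        next
          case False
          then show ?thesis using middle[of p] 3 \<open>\<not> snd p \<ge> 1/4\<close> q by auto
        qed
      qed
    qed
  qed
  then have sub: "extension KK ff \<subseteq> SL \<union> SR" unfolding E using cL cR
    by (intro closure_minimal) auto
  have MFsub: "MF \<subseteq> extension KK ff" unfolding E by (rule closure_subset)
  have qL: "((0,0), FF (0,0)) \<in> MF"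
  proof -
    have "aa 0 = 0" by (simp add: aa_def)
    have G0: "GG 0 = 0" using GG_in[of 0 0] gg_zero[of 0 0] \<open>aa 0 = 0\<close> aa_Suc[of 0] rr_pos[of 0] by auto
    have K0: "(0::real, 0::real) \<in> KK" using MM_I[of 0] G0 MM_sub by auto
    let ?U = "KK \<inter> {q::real\<times>real. fst q < 1/3}"
    have op: "openin (top_of_set KK) ?U"
      by (intro openin_open_Int open_Collect_less continuous_intros)
    have "{n. ?U \<inter> supp_on KK (ff n) \<noteq> {}} \<subseteq> {..<2}"
    proof
      fix n assume "n \<in> {n. ?U \<inter> supp_on KK (ff n) \<noteq> {}}"
      then obtain q where q: "fst q < 1/3" "q \<in> supp_on KK (ff n)" by auto
      then have "\<bar>fst q - aa n\<bar> \<le> rr n" using supp_f by blast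
      show "n \<in> {..<2}"
      proof (rule ccontr)
        assume "n \<notin> {..<2}"
        then have "aa 2 \<le> aa n" "rr n \<le> rr 2" by (auto intro: aa_mono rr_mono)
        moreover have "aa 2 = 3/8" "rr 2 = 1/32" by (simp_all add: aa_def rr_def power_divide)
        ultimately show False using q \<open>\<bar>fst q - aa n\<bar> \<le> rr n\<close> by auto
      qed
    qed
    then have "(0::real, 0::real) \<in> Dset KK ff"
      using K0 op by (intro DsetI[of _ ?U]) (auto intro: finite_subset)
    then show ?thesis unfolding MF_def by auto
  qed
  have FL: "FF (0,0) = 1/2"
  proof -
    have "ff 0 (0,0) = 1/2" by (simp add: ff_def aa_def)
    then show ?thesis using FF_eq[of 0 "(0,0)"] by simp
  qed
  have qR: "((1,0), FF (1,0)) \<in> MF"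
  proof -
    let ?U = "KK \<inter> {q::real\<times>real. 1/2 < fst q}"
    have op: "openin (top_of_set KK) ?U"
      by (intro openin_open_Int open_Collect_less continuous_intros)
    have "{n. ?U \<inter> supp_on KK (ff n) \<noteq> {}} = {}"
    proof -
      { fix n q assume q: "1/2 < fst q" "q \<in> supp_on KK (ff n)"
        then have "\<bar>fst q - aa n\<bar> \<le> rr n" using supp_f by blast
        then have False using q half_minus_aa[of n] rr_pos[of n] by auto }
      then show ?thesis by auto
    qed
    then have "(1::real, 0::real) \<in> Dset KK ff"
      using KK_ne op by (intro DsetI[of _ ?U]) auto
    then show ?thesis unfolding MF_def by auto
  qed
  have FR: "FF (1,0) = 0" using FF_zero ff_zero_ge by auto
  have iL: "((0,0), 1/2) \<in> SL \<inter> extension KK ff" using qL FL MFsub unfolding SL_def by auto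
  have iR: "((1,0), 0) \<in> SR \<inter> extension KK ff" using qR FR MFsub unfolding SR_def by auto
  have "\<exists>A B. closed A \<and> closed B \<and> extension KK ff \<subseteq> A \<union> B \<and> A \<inter> B \<inter> extension KK ff = {} \<and>
      A \<inter> extension KK ff \<noteq> {} \<and> B \<inter> extension KK ff \<noteq> {}"
  proof -
    have a1: "SL \<inter> SR \<inter> extension KK ff = {}" using dj by blast
    have a2: "SL \<inter> extension KK ff \<noteq> {}" using iL by blast
    have a3: "SR \<inter> extension KK ff \<noteq> {}" using iR by blast
    show ?thesis by (rule exI[of _ SL], rule exI[of _ SR], intro conjI) (fact cL cR sub a1 a2 a3)+
  qed
  then show ?thesis unfolding connected_closed by blast
qed

theorem theorem4p2:
  shows "\<exists>(K :: (real \<times> real) set) (f :: nat \<Rightarrow> real \<times> real \<Rightarrow> real) (g :: nat \<Rightarrow> real \<Rightarrow> real).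
     K \<noteq> {} \<and> compact K \<and> connected K \<and>
     (\<forall>n. g n \<in> C1 {0..1}) \<and> pairwise_disjoint_seq {0..1} g \<and> K = extension {0..1} g \<and>
     (\<forall>n. f n \<in> C1 K) \<and> pairwise_disjoint_seq K f \<and>
     \<not> connected (extension K f)"
proof (intro exI conjI)
  show "KK \<noteq> {}" using KK_ne by auto
  show "compact KK" by (rule KK_compact)
  show "connected KK" by (rule KK_conn)
  show "\<forall>n. gg n \<in> C1 {0..1}" using gg_cont gg_range by (auto simp: C1_def)
  show "pairwise_disjoint_seq {0..1} gg" using gg_disj by (auto simp: pairwise_disjoint_seq_def)
  show "KK = extension {0..1} gg" by (rule KK_def)
  show "\<forall>n. ff n \<in> C1 KK" using ff_cont ff_range by (auto simp: C1_def)
  show "pairwise_disjoint_seq KK ff" using ff_disj by (auto simp: pairwise_disjoint_seq_def)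
  show "\<not> connected (extension KK ff)" by (rule ext_disc)
qed

end
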